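(* Let $G$ be a subgroup of $\Sigma_n$ and let $G^+=G\cap\Sigma_n^+$. Suppose that the set of atoms $S=\{s_1,\dots,s_n\}$ of $G^+$ has exactly $n$ elements, generates $G$, and that there is a positive integer $k$ with $D_{s_i}=D_i^k$ for all $i$. Define a binary operation on $S$ by $s_i*s_j=s_{\psi(s_i)(j)}$. Then the following are equivalent: (i) $G$ is permutation-free, i.e. the only permutation matrix in $G$ is the identity; (ii) $s(s*t)=t(t*s)$ in $G$ for all $s,t\in S$; (iii) $(S,* )$ is a cycle set and $G$ is its structure group (i.e. $s\mapsto s$ induces an isomorphism from the structure group of $(S,* )$ onto $G$).
   Context: $\Sigma_n$ is the group of $n\times n$ monomial matrices (exactly one nonzero entry in each row and column) over $\mathbb Q[q,q^{-1}]$, $q$ an indeterminate, whose nonzero entries are integer powers of $q$; $\Sigma_n^+$ is the submonoid of those whose nonzero entries are nonnegative powers of $q$. For $\sigma\in\mathfrak S_n$, $P_\sigma$ is the matrix with entry $1$ at $(i,\sigma(i))$ and $0$ elsewhere. Every monomial matrix $m$ decomposes uniquely as $m=D_mP_m$ with $D_m$ diagonal and $P_m=P_{\psi(m)}$ a permutation matrix; $\psi(m)\in\mathfrak S_n$ is the associated permutation. $D_i$ denotes $\mathrm{diag}(1,\dots,1,q,1,\dots,1)$ with $q$ in the $i$-th position. An atom of $G^+$ is an element $a\neq I$ of $G^+$ such that $a=bc$ with $b,c\in G^+$ implies $b=I$ or $c=I$. A cycle set is a set $S$ with binary operation $*$ such that each $t\mapsto s*t$ is bijective and $(s*t)*(s*u)=(t*s)*(t*u)$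 for all $s,t,u$; its structure group is the group with generators $S$ and relations $s(s*t)=t(t*s)$ for $s\ne t$. *)

theory Defs
  imports "HOL-Algebra.Algebra" "HOL-Combinatorics.Permutations"
begin

text \<open>A monomial n x n matrix m over Q[q,q^-1] whose nonzero entries are powers of q
  is determined by its unique decomposition m = D_m P_m, where D_m = diag(q^(d 1),...,q^(d n))
  and P_m = P_sigma (entry 1 at (i, sigma i)). We represent m by the pair (d, sigma) with
  indices 1..n; d is taken to be 0 outside {1..n}, and sigma permutes {1..n}.
  Matrix multiplication: (D P_sigma)(E P_tau) = D (P_sigma E P_sigma^-1) P_sigma P_tau and
  P_sigma E P_sigma^-1 = diag(e (sigma i)), P_sigma P_tau = P_(tau o sigma).
  Hence (d,sigma)(e,tau) = (\<lambda>i. d i + e (sigma i), tau o sigma).\<close>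

type_synonym mono = "(nat \<Rightarrow> int) \<times> (nat \<Rightarrow> nat)"

definition Sigma_n :: "nat \<Rightarrow> mono monoid" where
  "Sigma_n n = \<lparr> carrier = {m. snd m permutes {1..n} \<and> (\<forall>i. i \<notin> {1..n} \<longrightarrow> fst m i = 0)},
                 monoid.mult = (\<lambda>m m'. (\<lambda>i. fst m i + fst m' (snd m i), snd m' \<circ> snd m)),
                 monoid.one = (\<lambda>_. 0, id) \<rparr>"

definition Dpart :: "mono \<Rightarrow> (nat \<Rightarrow> int)" where "Dpart m = fst m"
definition psi :: "mono \<Rightarrow> (nat \<Rightarrow> nat)" where "psi m = snd m"

definition Sigma_n_plus :: "nat \<Rightarrow> mono set" where
  "Sigma_n_plus n = {m \<in> carrier (Sigma_n n). \<forall>i. Dpart m i \<ge> 0}"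

text \<open>Exponent vector of D_i^k = diag(1,..,q^k,..,1).\<close>
definition Di_pow :: "nat \<Rightarrow> int \<Rightarrow> (nat \<Rightarrow> int)" where
  "Di_pow i k = (\<lambda>j. if j = i then k else 0)"

definition Pmat :: "(nat \<Rightarrow> nat) \<Rightarrow> mono" where "Pmat \<sigma> = (\<lambda>_. 0, \<sigma>)"

definition atoms :: "('a, 'b) monoid_scheme \<Rightarrow> 'a set \<Rightarrow> 'a set" where
  "atoms M P = {a \<in> P. a \<noteq> \<one>\<^bsub>M\<^esub> \<and>
      (\<forall>b\<in>P. \<forall>c\<in>P. a = b \<otimes>\<^bsub>M\<^esub> c \<longrightarrow> b = \<one>\<^bsub>M\<^esub> \<or> c = \<one>\<^bsub>M\<^esub>)}"

definition permutation_free :: "nat \<Rightarrow> mono set \<Rightarrow> bool" where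
  "permutation_free n G \<longleftrightarrow> (\<forall>\<sigma>. \<sigma> permutes {1..n} \<longrightarrow> Pmat \<sigma> \<in> G \<longrightarrow> Pmat \<sigma> = \<one>\<^bsub>Sigma_n n\<^esub>)"

definition cycle_set :: "'a set \<Rightarrow> ('a \<Rightarrow> 'a \<Rightarrow> 'a) \<Rightarrow> bool" where
  "cycle_set S op \<longleftrightarrow> (\<forall>s\<in>S. bij_betw (op s) S S) \<and>
     (\<forall>s\<in>S. \<forall>t\<in>S. \<forall>u\<in>S. op (op s t) (op s u) = op (op t s) (op t u))"

text \<open>Words over S: letters (True, x) = x, (False, x) = x^-1. Free reduction via a stack.\<close>
fun fg_red :: "(bool \<times> 'a) list \<Rightarrow> (bool \<times> 'a) list" where
  "fg_red [] = []"
| "fg_red (x # xs) = (case fg_red xs of [] \<Rightarrow> [x]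
      | y # ys \<Rightarrow> if fst y = (\<not> fst x) \<and> snd y = snd x then ys else x # y # ys)"

definition free_group :: "'a set \<Rightarrow> (bool \<times> 'a) list monoid" where
  "free_group S = \<lparr> carrier = {w. snd ` set w \<subseteq> S \<and> fg_red w = w},
                    monoid.mult = (\<lambda>w v. fg_red (w @ v)), monoid.one = [] \<rparr>"

definition normal_closure :: "('a, 'b) monoid_scheme \<Rightarrow> 'a set \<Rightarrow> 'a set" where
  "normal_closure G R = generate G (\<Union>g\<in>carrier G. (\<lambda>r. g \<otimes>\<^bsub>G\<^esub> r \<otimes>\<^bsub>G\<^esub> inv\<^bsub>G\<^esub> g) ` R)"

definition cs_relators :: "'a set \<Rightarrow> ('a \<Rightarrow> 'a \<Rightarrow> 'a) \<Rightarrow> (bool \<times> 'a) list set" where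
  "cs_relators S op = {fg_red [(True, s), (True, op s t), (False, op t s), (False, t)] | s t.
                          s \<in> S \<and> t \<in> S \<and> s \<noteq> t}"

definition structure_group :: "'a set \<Rightarrow> ('a \<Rightarrow> 'a \<Rightarrow> 'a) \<Rightarrow> (bool \<times> 'a) list set monoid" where
  "structure_group S op = free_group S Mod normal_closure (free_group S) (cs_relators S op)"

definition sg_gen :: "'a set \<Rightarrow> ('a \<Rightarrow> 'a \<Rightarrow> 'a) \<Rightarrow> 'a \<Rightarrow> (bool \<times> 'a) list set" where
  "sg_gen S op s = normal_closure (free_group S) (cs_relators S op) #>\<^bsub>free_group S\<^esub> [(True, s)]"

end

theory Submission
  imports Defs "HOL-Combinatorics.Cycles"
begin

lemma carrier_Sigma: "carrier (Sigma_n n) = {m. snd m permutes {1..n} \<and> (\<forall>i. i \<notin> {1..n} \<longrightarrow> fst m i = 0)}"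
  by (simp add: Sigma_n_def)
lemma mult_Sigma: "x \<otimes>\<^bsub>Sigma_n n\<^esub> y = (\<lambda>i. fst x i + fst y (snd x i), snd y \<circ> snd x)"
  by (simp add: Sigma_n_def)
lemma one_Sigma: "\<one>\<^bsub>Sigma_n n\<^esub> = (\<lambda>_. 0, id)"
  by (simp add: Sigma_n_def)

definition sinv :: "nat \<Rightarrow> mono \<Rightarrow> mono" where
  "sinv n m = (\<lambda>i. - fst m (inv_into UNIV (snd m) i), inv_into UNIV (snd m))"

lemma sinv_carr: "m \<in> carrier (Sigma_n n) \<Longrightarrow> sinv n m \<in> carrier (Sigma_n n)"
proof -
  assume m: "m \<in> carrier (Sigma_n n)"
  then have p: "snd m permutes {1..n}" by (simp add: carrier_Sigma)
  have "inv_into UNIV (snd m) i = i" if "i \<notin> {1..n}" for i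
    using permutes_not_in[OF permutes_inv[OF p] that] .
  with m p show ?thesis unfolding carrier_Sigma sinv_def by (auto simp: permutes_inv)
qed

lemma sinv_l: "m \<in> carrier (Sigma_n n) \<Longrightarrow> sinv n m \<otimes>\<^bsub>Sigma_n n\<^esub> m = \<one>\<^bsub>Sigma_n n\<^esub>"
  unfolding carrier_Sigma sinv_def mult_Sigma one_Sigma
  by (auto simp: permutes_inv_o)

lemma group_Sigma: "group (Sigma_n n)"
proof (rule groupI)
  fix x y assume "x \<in> carrier (Sigma_n n)" "y \<in> carrier (Sigma_n n)"
  then show "x \<otimes>\<^bsub>Sigma_n n\<^esub> y \<in> carrier (Sigma_n n)"
  proof -
    assume x: "x \<in> carrier (Sigma_n n)" and y: "y \<in> carrier (Sigma_n n)"
    then have px: "snd x permutes {1..n}" and py: "snd y permutes {1..n}"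
      by (simp_all add: carrier_Sigma)
    have "snd x i = i" if "i \<notin> {1..n}" for i using permutes_not_in[OF px that] .
    with x y show ?thesis unfolding carrier_Sigma mult_Sigma
      using permutes_compose[OF px py] by simp
  qed
next
  show "\<one>\<^bsub>Sigma_n n\<^esub> \<in> carrier (Sigma_n n)" unfolding carrier_Sigma one_Sigma
    by simp
next
  fix x y z assume "x \<in> carrier (Sigma_n n)" "y \<in> carrier (Sigma_n n)" "z \<in> carrier (Sigma_n n)"
  show "x \<otimes>\<^bsub>Sigma_n n\<^esub> y \<otimes>\<^bsub>Sigma_n n\<^esub> z = x \<otimes>\<^bsub>Sigma_n n\<^esub> (y \<otimes>\<^bsub>Sigma_n n\<^esub> z)"
    unfolding mult_Sigma by (simp add: add.assoc comp_assoc)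
next
  fix x assume "x \<in> carrier (Sigma_n n)"
  then show "\<one>\<^bsub>Sigma_n n\<^esub> \<otimes>\<^bsub>Sigma_n n\<^esub> x = x"
    unfolding mult_Sigma one_Sigma by auto
next
  fix x assume "x \<in> carrier (Sigma_n n)"
  then show "\<exists>y\<in>carrier (Sigma_n n). y \<otimes>\<^bsub>Sigma_n n\<^esub> x = \<one>\<^bsub>Sigma_n n\<^esub>"
    using sinv_carr sinv_l by blast
qed

lemma inv_Sigma: assumes m: "m \<in> carrier (Sigma_n n)" shows "inv\<^bsub>Sigma_n n\<^esub> m = sinv n m"
  by (rule group.inv_equality[OF group_Sigma sinv_l[OF m] m sinv_carr[OF m]])

lemma Sigma_same_fst:
  assumes "M1 \<in> carrier (Sigma_n n)" "M2 \<in> carrier (Sigma_n n)" "fst M1 = fst M2"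
  shows "(inv\<^bsub>Sigma_n n\<^esub> M2) \<otimes>\<^bsub>Sigma_n n\<^esub> M1 = Pmat (snd M1 \<circ> inv_into UNIV (snd M2))"
  using assms unfolding inv_Sigma[OF assms(2)] sinv_def mult_Sigma Pmat_def by simp

definition cv :: "nat \<Rightarrow> int \<Rightarrow> nat \<Rightarrow> int" where
  "cv n a = (\<lambda>l. if l \<in> {1..n} then a else 0)"

lemma cv_perm: "p permutes {1..n} \<Longrightarrow> cv n a (p l) = cv n a l"
proof -
  assume p: "p permutes {1..n}"
  have "p l \<in> {1..n} \<longleftrightarrow> l \<in> {1..n}" by (rule permutes_in_image[OF p])
  then show ?thesis unfolding cv_def by presburger
qed

lemma (in group) inv_commute:
  assumes "a \<in> carrier G" "b \<in> carrier G" "a \<otimes> b = b \<otimes> a"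
  shows "inv a \<otimes> b = b \<otimes> inv a"
proof -
  have "inv a \<otimes> b = inv a \<otimes> (b \<otimes> a) \<otimes> inv a" using assms by (simp add: m_assoc)
  also have "\<dots> = inv a \<otimes> (a \<otimes> b) \<otimes> inv a" using assms by simp
  also have "\<dots> = b \<otimes> inv a"
  proof -
    have "inv a \<otimes> (a \<otimes> b) = b" using assms(1,2) by (simp add: m_assoc[symmetric])
    then show ?thesis by simp
  qed
  finally show ?thesis .
qed

lemma cv_add: "cv n a l + cv n b l = cv n (a + b) l"
  by (simp add: cv_def)

locale gsetup = group +
  fixes n :: nat and k :: int and s :: "nat \<Rightarrow> mono" and phi :: "'a \<Rightarrow> mono" and x :: "nat \<Rightarrow> 'a"
  assumes phi_hom: "phi \<in> hom G (Sigma_n n)"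
  and x_carr: "\<And>i. i \<in> {1..n} \<Longrightarrow> x i \<in> carrier G"
  and phi_x: "\<And>i. i \<in> {1..n} \<Longrightarrow> phi (x i) = s i"
  and s_carr: "\<And>i. i \<in> {1..n} \<Longrightarrow> s i \<in> carrier (Sigma_n n)"
  and Ds: "\<And>i. i \<in> {1..n} \<Longrightarrow> fst (s i) = Di_pow i k"
  and kpos: "k > 0"
  and rel: "\<And>i j. i \<in> {1..n} \<Longrightarrow> j \<in> {1..n} \<Longrightarrow>
             x i \<otimes> x (snd (s i) j) = x j \<otimes> x (snd (s j) i)"
begin

definition P :: "nat list \<Rightarrow> 'a" where "P L = foldr (\<lambda>i acc. x i \<otimes> acc) L \<one>"

lemma P_Nil[simp]: "P [] = \<one>" and P_Cons[simp]: "P (i # L) = x i \<otimes> P L"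
  by (simp_all add: P_def)

lemma P_carr: "set L \<subseteq> {1..n} \<Longrightarrow> P L \<in> carrier G"
  by (induction L) (auto simp: x_carr)

lemma P_append: "set L1 \<subseteq> {1..n} \<Longrightarrow> set L2 \<subseteq> {1..n} \<Longrightarrow> P (L1 @ L2) = P L1 \<otimes> P L2"
  by (induction L1) (auto simp: x_carr P_carr m_assoc)

lemma phiG: "group_hom G (Sigma_n n) phi"
  by (simp add: group_hom_def group_hom_axioms_def is_group group_Sigma phi_hom)

lemma phi_mult: "a \<in> carrier G \<Longrightarrow> b \<in> carrier G \<Longrightarrow> phi (a \<otimes> b) = phi a \<otimes>\<^bsub>Sigma_n n\<^esub> phi b"
  using group_hom.hom_mult[OF phiG] by blast

lemma phi_one: "phi \<one> = (\<lambda>_. 0, id)"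
  using group_hom.hom_one[OF phiG] by (simp add: one_Sigma)

lemma phi_carr: "a \<in> carrier G \<Longrightarrow> phi a \<in> carrier (Sigma_n n)"
  using group_hom.hom_closed[OF phiG] by blast

definition sig :: "nat \<Rightarrow> nat \<Rightarrow> nat" where "sig i = snd (s i)"

lemma sig_perm: "i \<in> {1..n} \<Longrightarrow> sig i permutes {1..n}"
  using s_carr by (simp add: sig_def carrier_Sigma)

lemma sig_in: "i \<in> {1..n} \<Longrightarrow> j \<in> {1..n} \<Longrightarrow> sig i j \<in> {1..n}"
  using permutes_in_image[OF sig_perm] by blast

lemma rel': "i \<in> {1..n} \<Longrightarrow> j \<in> {1..n} \<Longrightarrow> x i \<otimes> x (sig i j) = x j \<otimes> x (sig j i)"
  using rel by (simp add: sig_def)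

definition Dv :: "nat list \<Rightarrow> nat \<Rightarrow> int" where "Dv L = fst (phi (P L))"

lemma Dv_Nil: "Dv [] = (\<lambda>_. 0)"
  by (simp add: Dv_def phi_one)

lemma Dv_Cons: "i \<in> {1..n} \<Longrightarrow> set L \<subseteq> {1..n} \<Longrightarrow>
   Dv (i # L) = (\<lambda>l. Di_pow i k l + Dv L (sig i l))"
  by (simp add: Dv_def phi_mult x_carr P_carr phi_x mult_Sigma Ds sig_def)

lemma Dv_nonneg: "set L \<subseteq> {1..n} \<Longrightarrow> Dv L l \<ge> 0"
proof (induction L arbitrary: l)
  case Nil then show ?case by (simp add: Dv_Nil)
next
  case (Cons i L)
  then show ?case using kpos by (simp add: Dv_Cons Di_pow_def add_nonneg_nonneg)
qed

lemma split_first: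
  "set L \<subseteq> {1..n} \<Longrightarrow> j \<in> {1..n} \<Longrightarrow> Dv L j > 0 \<Longrightarrow>
     \<exists>L'. set L' \<subseteq> {1..n} \<and> P L = x j \<otimes> P L'"
proof (induction L arbitrary: j)
  case Nil then show ?case by (simp add: Dv_Nil)
next
  case (Cons i L)
  have i: "i \<in> {1..n}" and L: "set L \<subseteq> {1..n}" using Cons.prems by auto
  show ?case
  proof (cases "i = j")
    case True then show ?thesis using L by auto
  next
    case False
    then have "Dv L (sig i j) > 0" using Cons.prems(3) by (simp add: Dv_Cons[OF i L] Di_pow_def)
    moreover have sj: "sig i j \<in> {1..n}" using sig_in[OF i Cons.prems(2)] .
    ultimately obtain L'' where L'': "set L'' \<subseteq> {1..n}" "P L = x (sig i j) \<otimes> P L''"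
      using Cons.IH L by blast
    have "P (i # L) = (x i \<otimes> x (sig i j)) \<otimes> P L''"
      using L'' i sj by (simp add: m_assoc x_carr P_carr)
    also have "\<dots> = (x j \<otimes> x (sig j i)) \<otimes> P L''" using rel'[OF i Cons.prems(2)] by simp
    also have "\<dots> = x j \<otimes> P (sig j i # L'')"
      using L'' i Cons.prems(2) sig_in[OF Cons.prems(2) i] by (simp add: m_assoc x_carr P_carr)
    finally show ?thesis using L'' sig_in[OF Cons.prems(2) i] by (intro exI[of _ "sig j i # L''"]) auto
  qed
qed

lemma unique_P:
  "set L1 \<subseteq> {1..n} \<Longrightarrow> set L2 \<subseteq> {1..n} \<Longrightarrow> Dv L1 = Dv L2 \<Longrightarrow> P L1 = P L2"
proof (induction L1 arbitrary: L2)
  case Nil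
  show ?case
  proof (cases L2)
    case Nil then show ?thesis by simp
  next
    case (Cons i L)
    have i: "i \<in> {1..n}" and L: "set L \<subseteq> {1..n}" using Nil.prems Cons by auto
    have "Dv L2 i \<ge> k" using Dv_nonneg[OF L, of "sig i i"] by (simp add: Cons Dv_Cons[OF i L] Di_pow_def)
    moreover have "Dv L2 i = 0" using fun_cong[OF Nil.prems(3), of i] by (simp add: Dv_Nil)
    ultimately show ?thesis using kpos by simp
  qed
next
  case (Cons i L)
  have i: "i \<in> {1..n}" and L: "set L \<subseteq> {1..n}" using Cons.prems by auto
  have "Dv (i # L) i \<ge> k" using Dv_nonneg[OF L, of "sig i i"] by (simp add: Dv_Cons[OF i L] Di_pow_def)
  then have "Dv L2 i > 0" using Cons.prems(3) kpos by simp
  then obtain L2' where L2': "set L2' \<subseteq> {1..n}" "P L2 = x i \<otimes> P L2'"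
    using split_first Cons.prems(2) i by blast
  have "Dv L2 = Dv (i # L2')" using L2' by (simp add: Dv_def)
  then have eq: "Dv (i # L) = Dv (i # L2')" using Cons.prems(3) by simp
  have "Dv L m = Dv L2' m" for m
  proof -
    have "Dv L (sig i (inv_into UNIV (sig i) m)) = Dv L2' (sig i (inv_into UNIV (sig i) m))"
      using fun_cong[OF eq, of "inv_into UNIV (sig i) m"] by (simp add: Dv_Cons[OF i L] Dv_Cons[OF i L2'(1)])
    then show ?thesis by (simp add: permutes_inverses(1)[OF sig_perm[OF i]])
  qed
  then have "P L = P L2'" using Cons.IH[OF L L2'(1)] by auto
  then show ?case using L2' by simp
qed

end

context gsetup begin

lemma exists_vec:
  fixes u :: "nat \<Rightarrow> nat"
  assumes "\<forall>l. l \<notin> {1..n} \<longrightarrow> u l = 0"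
  shows "\<exists>L. set L \<subseteq> {1..n} \<and> Dv L = (\<lambda>l. k * int (u l))"
  using assms
proof (induction "sum u {1..n}" arbitrary: u rule: less_induct)
  case less
  show ?case
  proof (cases "\<forall>l\<in>{1..n}. u l = 0")
    case True
    have "u = (\<lambda>_. 0)"
    proof
      fix l show "u l = 0" using True less.prems by (cases "l \<in> {1..n}") auto
    qed
    then show ?thesis by (intro exI[of _ "[]"]) (simp add: Dv_Nil)
  next
    case False
    then obtain j where j: "j \<in> {1..n}" "u j > 0" by auto
    define u' where "u' = u(j := u j - 1)"
    define w where "w = u' \<circ> inv_into UNIV (sig j)"
    have pj: "sig j permutes {1..n}" using sig_perm[OF j(1)] .
    have w0: "\<forall>l. l \<notin> {1..n} \<longrightarrow> w l = 0"
    proof (intro allI impI)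
      fix l assume l: "l \<notin> {1..n}"
      have "inv_into UNIV (sig j) l = l" using permutes_not_in[OF permutes_inv[OF pj] l] .
      then show "w l = 0" using l j less.prems by (auto simp: w_def u'_def)
    qed
    have "sum w {1..n} = sum u' {1..n}"
      unfolding w_def using sum.permute[OF permutes_inv[OF pj], of u'] by simp
    also have "\<dots> < sum u {1..n}"
      using j by (intro sum_strict_mono_ex1) (auto simp: u'_def)
    finally obtain L where L: "set L \<subseteq> {1..n}" "Dv L = (\<lambda>l. k * int (w l))"
      using less.hyps w0 by blast
    have "Dv (j # L) = (\<lambda>l. k * int (u l))"
    proof
      fix l
      have "Dv (j # L) l = Di_pow j k l + k * int (u' l)"
        using L by (simp add: Dv_Cons[OF j(1) L(1)] w_def permutes_inverses(2)[OF pj])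
      also have "\<dots> = k * int (u l)"
        using j(2) by (auto simp: Di_pow_def u'_def of_nat_diff algebra_simps)
      finally show "Dv (j # L) l = k * int (u l)" .
    qed
    then show ?thesis using L j by (intro exI[of _ "j # L"]) auto
  qed
qed

lemma pow_list:
  assumes L0: "set L0 \<subseteq> {1..n}" and ph: "phi (P L0) = (cv n a, p)" and p: "p permutes {1..n}"
  shows "phi (P (concat (replicate m L0))) = (cv n (int m * a), p ^^ m)"
proof (induction m)
  case 0 then show ?case by (simp add: phi_one cv_def fun_eq_iff)
next
  case (Suc m)
  have s1: "set (concat (replicate m L0)) \<subseteq> {1..n}" using L0 by auto
  have "phi (P (concat (replicate (Suc m) L0))) = phi (P L0) \<otimes>\<^bsub>Sigma_n n\<^esub> phi (P (concat (replicate m L0)))"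
    using L0 s1 by (simp add: P_append phi_mult P_carr)
  also have "\<dots> = (cv n (int (Suc m) * a), p ^^ Suc m)"
    unfolding ph Suc mult_Sigma
    by (simp add: cv_perm[OF p] cv_add algebra_simps fun_eq_iff funpow_swap1)
  finally show ?case .
qed

end

context gsetup begin

lemma central_exists: "\<exists>Lm c. set Lm \<subseteq> {1..n} \<and> c > 0 \<and> phi (P Lm) = (cv n c, id)"
proof -
  have "\<forall>l. l \<notin> {1..n} \<longrightarrow> (if l \<in> {1..n} then 1 else 0::nat) = 0" by simp
  from exists_vec[OF this] obtain Lz where
    Lz: "set Lz \<subseteq> {1..n}" "Dv Lz = (\<lambda>l. k * int (if l \<in> {1..n} then 1 else 0))"
    by blast
  have Dz: "fst (phi (P Lz)) = cv n k" using Lz(2) by (auto simp: Dv_def cv_def fun_eq_iff)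
  define p where "p = snd (phi (P Lz))"
  have p: "p permutes {1..n}" using phi_carr[OF P_carr[OF Lz(1)]] by (simp add: p_def carrier_Sigma)
  have ph: "phi (P Lz) = (cv n k, p)" using Dz p_def by (metis prod.collapse)
  obtain m where m: "p ^^ m = id" "m > 0"
    using permutation_is_nilpotent[of p] p permutation_permutes by blast
  have "phi (P (concat (replicate m Lz))) = (cv n (int m * k), id)"
    using pow_list[OF Lz(1) ph p, of m] m by simp
  moreover have "int m * k > 0" using m kpos by simp
  moreover have "set (concat (replicate m Lz)) \<subseteq> {1..n}" using Lz by auto
  ultimately show ?thesis by blast
qed

context
  fixes Lm c assumes Lm: "set Lm \<subseteq> {1..n}" and cpos: "c > 0" and phLm: "phi (P Lm) = (cv n c, id)"
begin

definition Lp :: "nat \<Rightarrow> nat list" where "Lp a = concat (replicate a Lm)"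

lemma Lp_set: "set (Lp a) \<subseteq> {1..n}" using Lm by (auto simp: Lp_def)

lemma phi_Lp: "phi (P (Lp a)) = (cv n (int a * c), id)"
  unfolding Lp_def using pow_list[OF Lm phLm permutes_id, of a] by simp

lemma Lp_add: "P (Lp (a + b)) = P (Lp a) \<otimes> P (Lp b)"
  using P_append[OF Lp_set Lp_set] by (simp add: Lp_def replicate_add)

lemma Lp_one: "P (Lp 1) = P Lm" using Lm by (simp add: Lp_def)

lemma x_comm: "i \<in> {1..n} \<Longrightarrow> x i \<otimes> P Lm = P Lm \<otimes> x i"
proof -
  assume i: "i \<in> {1..n}"
  have "P (i # Lm) = P (Lm @ [i])"
  proof (rule unique_P)
    show "set (i # Lm) \<subseteq> {1..n}" "set (Lm @ [i]) \<subseteq> {1..n}" using i Lm by auto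
    have DLm: "Dv Lm = cv n c" using phLm by (simp add: Dv_def)
    have "Dv (i # Lm) = (\<lambda>l. Di_pow i k l + Dv Lm (sig i l))" by (rule Dv_Cons[OF i Lm])
    also have "\<dots> = (\<lambda>l. Di_pow i k l + cv n c l)"
      unfolding DLm by (simp add: cv_perm[OF sig_perm[OF i]])
    finally have "Dv (i # Lm) = (\<lambda>l. Di_pow i k l + cv n c l)" .
    moreover have "Dv (Lm @ [i]) = (\<lambda>l. cv n c l + Di_pow i k l)"
      using phLm i Lm by (simp add: Dv_def P_append phi_mult P_carr x_carr phi_x mult_Sigma Ds)
    ultimately show "Dv (i # Lm) = Dv (Lm @ [i])" by (simp add: fun_eq_iff)
  qed
  then show ?thesis using i Lm by (simp add: P_append P_carr x_carr)
qed

lemma P_comm: "set L \<subseteq> {1..n} \<Longrightarrow> P Lm \<otimes> P L = P L \<otimes> P Lm"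
proof (induction L)
  case Nil then show ?case using P_carr[OF Lm] by simp
next
  case (Cons i L)
  have i: "i \<in> {1..n}" and L: "set L \<subseteq> {1..n}" using Cons.prems by auto
  have "P Lm \<otimes> P (i # L) = (P Lm \<otimes> x i) \<otimes> P L"
    using i L P_carr[OF Lm] by (simp add: m_assoc x_carr P_carr)
  also have "\<dots> = x i \<otimes> (P Lm \<otimes> P L)"
    using i L P_carr[OF Lm] x_comm[OF i, symmetric] by (simp add: m_assoc x_carr P_carr)
  also have "\<dots> = P (i # L) \<otimes> P Lm"
    using i L P_carr[OF Lm] Cons.IH[OF L] by (simp add: m_assoc x_carr P_carr)
  finally show ?case .
qed

lemma Lp_comm: "set L \<subseteq> {1..n} \<Longrightarrow> P (Lp a) \<otimes> P L = P L \<otimes> P (Lp a)"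
proof (induction a)
  case 0 then show ?case by (simp add: Lp_def P_carr)
next
  case (Suc a)
  have e: "P (Lp (Suc a)) = P Lm \<otimes> P (Lp a)"
    using Lp_add[of 1 a] Lp_one by simp
  have "P (Lp (Suc a)) \<otimes> P L = P Lm \<otimes> (P (Lp a) \<otimes> P L)"
    unfolding e using Suc.prems P_carr[OF Lm] P_carr[OF Lp_set] by (simp add: m_assoc P_carr)
  also have "\<dots> = (P Lm \<otimes> P L) \<otimes> P (Lp a)"
    using Suc P_carr[OF Lm] P_carr[OF Lp_set] by (simp add: m_assoc P_carr)
  also have "\<dots> = P L \<otimes> P (Lp (Suc a))"
    unfolding e using Suc P_carr[OF Lm] P_carr[OF Lp_set] P_comm by (simp add: m_assoc P_carr)
  finally show ?case .
qed

lemma represent: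
  "y \<in> generate G (x ` {1..n}) \<Longrightarrow> \<exists>L a. set L \<subseteq> {1..n} \<and> y = P L \<otimes> inv (P (Lp a))"
proof (induction rule: generate.induct)
  case one
  then show ?case by (intro exI[of _ "[]"] exI[of _ 0]) (simp add: Lp_def)
next
  case (incl h)
  then obtain i where i: "i \<in> {1..n}" "h = x i" by auto
  then show ?case by (intro exI[of _ "[i]"] exI[of _ 0]) (simp add: Lp_def x_carr)
next
  case (inv h)
  then obtain i where i: "i \<in> {1..n}" "h = x i" by auto
  have "Dv Lm i > 0" using phLm i cpos by (simp add: Dv_def cv_def)
  then obtain L' where L': "set L' \<subseteq> {1..n}" "P Lm = x i \<otimes> P L'"
    using split_first[OF Lm i(1)] by blast
  have "inv (x i) \<otimes> P Lm = P L'"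
    unfolding L'(2) using i L' by (simp add: m_assoc[symmetric] x_carr P_carr)
  then have "inv (x i) = P L' \<otimes> inv (P Lm)"
    using i L' P_carr[OF Lm] by (simp add: inv_solve_right x_carr P_carr)
  then show ?case using L' i Lp_one by (intro exI[of _ L'] exI[of _ 1]) simp
next
  case (eng h1 h2)
  obtain L1 a1 where 1: "set L1 \<subseteq> {1..n}" "h1 = P L1 \<otimes> inv (P (Lp a1))" using eng.IH(1) by blast
  obtain L2 a2 where 2: "set L2 \<subseteq> {1..n}" "h2 = P L2 \<otimes> inv (P (Lp a2))" using eng.IH(2) by blast
  have c1: "P (Lp a1) \<in> carrier G" "P (Lp a2) \<in> carrier G" using P_carr[OF Lp_set] by auto
  have cL: "P L1 \<in> carrier G" "P L2 \<in> carrier G" using P_carr 1 2 by auto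
  have com: "inv (P (Lp a1)) \<otimes> P L2 = P L2 \<otimes> inv (P (Lp a1))"
    using inv_commute[OF c1(1) cL(2) Lp_comm[OF 2(1)]] .
  have "h1 \<otimes> h2 = P L1 \<otimes> (inv (P (Lp a1)) \<otimes> P L2) \<otimes> inv (P (Lp a2))"
    using 1 2 c1 cL by (simp add: m_assoc)
  also have "\<dots> = (P L1 \<otimes> P L2) \<otimes> (inv (P (Lp a1)) \<otimes> inv (P (Lp a2)))"
    unfolding com using c1 cL by (simp add: m_assoc)
  also have "\<dots> = P (L1 @ L2) \<otimes> inv (P (Lp (a2 + a1)))"
    using c1 cL 1 2 by (simp add: P_append Lp_add inv_mult_group)
  finally show ?case using 1 2 by (intro exI[of _ "L1 @ L2"] exI[of _ "a2 + a1"]) simp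
qed

lemma trivial_core:
  assumes y: "y \<in> generate G (x ` {1..n})" and f: "fst (phi y) = (\<lambda>_. 0)"
  shows "y = \<one>"
proof -
  obtain L a where L: "set L \<subseteq> {1..n}" "y = P L \<otimes> inv (P (Lp a))" using represent[OF y] by blast
  have "x ` {1..n} \<subseteq> carrier G" using x_carr by auto
  then have yc: "y \<in> carrier G" using generate_in_carrier[OF _ y] by auto
  have Zc: "P (Lp a) \<in> carrier G" using P_carr[OF Lp_set] .
  have PL: "P L = y \<otimes> P (Lp a)" using L yc Zc P_carr[OF L(1)] by (simp add: inv_solve_right)
  have py: "snd (phi y) permutes {1..n}" using phi_carr[OF yc] by (simp add: carrier_Sigma)
  have "Dv L = fst (phi y \<otimes>\<^bsub>Sigma_n n\<^esub> phi (P (Lp a)))"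
    unfolding Dv_def PL using yc Zc by (simp add: phi_mult)
  also have "\<dots> = cv n (int a * c)"
    unfolding mult_Sigma f phi_Lp by (simp add: cv_perm[OF py])
  also have "\<dots> = Dv (Lp a)" by (simp add: Dv_def phi_Lp)
  finally have "P L = P (Lp a)" using unique_P[OF L(1) Lp_set] by blast
  then show ?thesis using L Zc by simp
qed

end

theorem trivial_kernel:
  assumes y: "y \<in> generate G (x ` {1..n})" and f: "fst (phi y) = (\<lambda>_. 0)"
  shows "y = \<one>"
  using central_exists trivial_core[OF _ _ _ y f] by blast

end

definition invl :: "bool \<times> 'a \<Rightarrow> bool \<times> 'a \<Rightarrow> bool" where
  "invl a b \<longleftrightarrow> fst b = (\<not> fst a) \<and> snd b = snd a"

definition red1 :: "bool \<times> 'a \<Rightarrow> (bool \<times> 'a) list \<Rightarrow> (bool \<times> 'a) list" where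
  "red1 a t = (case t of [] \<Rightarrow> [a] | b # bs \<Rightarrow> if invl a b then bs else a # b # bs)"

lemma fg_red_Cons: "fg_red (a # w) = red1 a (fg_red w)"
  by (simp add: red1_def invl_def split: list.split)

declare fg_red.simps(2)[simp del]

fun noadj :: "(bool \<times> 'a) list \<Rightarrow> bool" where
  "noadj [] = True"
| "noadj [a] = True"
| "noadj (a # b # bs) = (\<not> invl a b \<and> noadj (b # bs))"

lemma noadj_tl: "noadj (a # w) \<Longrightarrow> noadj w"
  by (cases w) auto

lemma noadj_red1: "noadj t \<Longrightarrow> noadj (red1 a t)"
  by (cases t) (auto simp: red1_def dest: noadj_tl)

lemma noadj_fg_red: "noadj (fg_red w)"
  by (induction w) (auto simp: fg_red_Cons noadj_red1)

lemma noadj_fix: "noadj w \<Longrightarrow> fg_red w = w"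
proof (induction w)
  case Nil then show ?case by simp
next
  case (Cons a w)
  then have "fg_red w = w" using noadj_tl by blast
  then show ?case using Cons.prems by (cases w) (auto simp: fg_red_Cons red1_def)
qed

lemma fg_red_idem[simp]: "fg_red (fg_red w) = fg_red w"
  using noadj_fix[OF noadj_fg_red] .

lemma red1_cancel: "invl a b \<Longrightarrow> noadj t \<Longrightarrow> red1 a (red1 b t) = t"
proof (cases t)
  case Nil
  assume "invl a b" then show ?thesis using Nil by (simp add: red1_def)
next
  case (Cons c t')
  assume ab: "invl a b" and nt: "noadj t"
  show ?thesis
  proof (cases "invl b c")
    case True
    then have ca: "c = a" using ab by (cases a; cases b; cases c) (auto simp: invl_def)
    have "red1 a t' = a # t'"
      using nt Cons ca by (cases t') (auto simp: red1_def)
    then show ?thesis using True Cons ca by (simp add: red1_def)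
  next
    case False
    then show ?thesis using Cons ab by (simp add: red1_def)
  qed
qed

lemma fg_red_app_right: "fg_red (xs @ ys) = fg_red (xs @ fg_red ys)"
  by (induction xs) (auto simp: fg_red_Cons)

lemma red1_app: "noadj r \<Longrightarrow> fg_red (red1 a r @ ys) = red1 a (fg_red (r @ ys))"
proof (cases r)
  case Nil then show ?thesis by (simp add: red1_def fg_red_Cons)
next
  case (Cons b r')
  assume nr: "noadj r"
  show ?thesis
  proof (cases "invl a b")
    case True
    have "red1 a (fg_red (r @ ys)) = red1 a (red1 b (fg_red (r' @ ys)))"
      using Cons by (simp add: fg_red_Cons)
    also have "\<dots> = fg_red (r' @ ys)" using red1_cancel[OF True noadj_fg_red] .
    finally show ?thesis using True Cons by (simp add: red1_def)
  next
    case False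
    then show ?thesis using Cons by (simp add: red1_def fg_red_Cons)
  qed
qed

lemma fg_red_app_left: "fg_red (fg_red xs @ ys) = fg_red (xs @ ys)"
proof (induction xs)
  case Nil then show ?case by simp
next
  case (Cons a xs)
  have "fg_red (fg_red (a # xs) @ ys) = red1 a (fg_red (fg_red xs @ ys))"
    by (simp add: fg_red_Cons red1_app[OF noadj_fg_red])
  then show ?case using Cons by (simp add: fg_red_Cons)
qed

lemma set_red1: "set (red1 a t) \<subseteq> insert a (set t)"
  by (cases t) (auto simp: red1_def)

lemma set_fg_red: "set (fg_red w) \<subseteq> set w"
proof (induction w)
  case Nil then show ?case by simp
next
  case (Cons a w) then show ?case using set_red1[of a "fg_red w"] by (auto simp: fg_red_Cons)
qed

definition flip :: "bool \<times> 'a \<Rightarrow> bool \<times> 'a" where "flip a = (\<not> fst a, snd a)"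
definition finv :: "(bool \<times> 'a) list \<Rightarrow> (bool \<times> 'a) list" where "finv w = rev (map flip w)"

lemma finv_cancel: "fg_red (finv w @ w) = []"
proof (induction w)
  case Nil then show ?case by (simp add: finv_def)
next
  case (Cons a w)
  have "fg_red (finv (a # w) @ a # w) = fg_red (finv w @ fg_red (flip a # a # w))"
    using fg_red_app_right[of "finv w" "flip a # a # w"] by (simp add: finv_def)
  also have "fg_red (flip a # a # w) = fg_red w"
    by (simp add: fg_red_Cons red1_cancel noadj_fg_red invl_def flip_def)
  finally show ?case using Cons fg_red_app_right[of "finv w" w] by simp
qed

lemma carrier_FG: "carrier (free_group S) = {w. snd ` set w \<subseteq> S \<and> fg_red w = w}"
  and mult_FG: "w \<otimes>\<^bsub>free_group S\<^esub> v = fg_red (w @ v)"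
  and one_FG: "\<one>\<^bsub>free_group S\<^esub> = []"
  by (simp_all add: free_group_def)

lemma group_FG: "group (free_group S)"
proof (rule groupI)
  fix w v assume "w \<in> carrier (free_group S)" "v \<in> carrier (free_group S)"
  then show "w \<otimes>\<^bsub>free_group S\<^esub> v \<in> carrier (free_group S)"
  proof -
    assume "w \<in> carrier (free_group S)" "v \<in> carrier (free_group S)"
    then have "snd ` set (w @ v) \<subseteq> S" by (auto simp: carrier_FG)
    moreover have "snd ` set (fg_red (w @ v)) \<subseteq> snd ` set (w @ v)"
      by (rule image_mono[OF set_fg_red])
    ultimately have "snd ` set (fg_red (w @ v)) \<subseteq> S" by (rule subset_trans[rotated])
    then show ?thesis unfolding carrier_FG mult_FG by simp
  qed
next
  show "\<one>\<^bsub>free_group S\<^esub> \<in> carrier (free_group S)" by (simp add: carrier_FG one_FG)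
next
  fix w v u
  show "w \<otimes>\<^bsub>free_group S\<^esub> v \<otimes>\<^bsub>free_group S\<^esub> u = w \<otimes>\<^bsub>free_group S\<^esub> (v \<otimes>\<^bsub>free_group S\<^esub> u)"
    unfolding mult_FG fg_red_app_left using fg_red_app_right[of w "v @ u"] by simp
next
  fix w assume "w \<in> carrier (free_group S)"
  then show "\<one>\<^bsub>free_group S\<^esub> \<otimes>\<^bsub>free_group S\<^esub> w = w" by (simp add: carrier_FG one_FG mult_FG)
next
  fix w assume w: "w \<in> carrier (free_group S)"
  have "snd ` set (finv w) = snd ` set w" by (simp add: finv_def flip_def image_image)
  then have "snd ` set (finv w) \<subseteq> S" using w by (simp add: carrier_FG)
  moreover have "snd ` set (fg_red (finv w)) \<subseteq> snd ` set (finv w)"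
    by (rule image_mono[OF set_fg_red])
  ultimately have "snd ` set (fg_red (finv w)) \<subseteq> S" by (rule subset_trans[rotated])
  then have "fg_red (finv w) \<in> carrier (free_group S)" by (simp add: carrier_FG)
  moreover have "fg_red (finv w) \<otimes>\<^bsub>free_group S\<^esub> w = \<one>\<^bsub>free_group S\<^esub>"
    by (simp add: mult_FG one_FG fg_red_app_left finv_cancel)
  ultimately show "\<exists>y\<in>carrier (free_group S). y \<otimes>\<^bsub>free_group S\<^esub> w = \<one>\<^bsub>free_group S\<^esub>" by blast
qed

locale mainctx =
  fixes n :: nat and G :: "mono set" and s :: "nat \<Rightarrow> mono" and k :: int
  assumes sub: "subgroup G (Sigma_n n)"
    and at: "atoms (Sigma_n n) (G \<inter> Sigma_n_plus n) = s ` {1..n}"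
    and cd: "card (atoms (Sigma_n n) (G \<inter> Sigma_n_plus n)) = n"
    and gen: "generate (Sigma_n n) (atoms (Sigma_n n) (G \<inter> Sigma_n_plus n)) = G"
    and kpos: "k > 0"
    and Ds: "\<forall>i\<in>{1..n}. Dpart (s i) = Di_pow i k"
begin

lemma inj_s: "inj_on s {1..n}"
  using cd at by (simp add: inj_on_iff_eq_card)

lemma S_G: "s ` {1..n} \<subseteq> G"
  using at[symmetric] by (auto simp: atoms_def)

lemma G_carr: "G \<subseteq> carrier (Sigma_n n)" using subgroup.subset[OF sub] .

lemma s_G: "i \<in> {1..n} \<Longrightarrow> s i \<in> G"
proof -
  assume i: "i \<in> {1..n}"
  then have "s i \<in> s ` {1..n}" by (rule imageI)
  then show ?thesis using S_G by (rule subsetD[rotated])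
qed

lemma s_carr: "i \<in> {1..n} \<Longrightarrow> s i \<in> carrier (Sigma_n n)" using s_G G_carr by (rule subsetD[rotated])

lemma sperm: "i \<in> {1..n} \<Longrightarrow> snd (s i) permutes {1..n}"
  using s_carr by (simp add: carrier_Sigma)

lemma sperm_in: "i \<in> {1..n} \<Longrightarrow> j \<in> {1..n} \<Longrightarrow> snd (s i) j \<in> {1..n}"
  using permutes_in_image[OF sperm] by blast

lemma Ds': "i \<in> {1..n} \<Longrightarrow> fst (s i) = Di_pow i k" using Ds by (simp add: Dpart_def)

lemma inv_s: "j \<in> {1..n} \<Longrightarrow> inv_into {1..n} s (s j) = j"
  by (rule inv_into_f_f[OF inj_s])

lemma inv_s2[simp]: "Suc 0 \<le> j \<Longrightarrow> j \<le> n \<Longrightarrow> inv_into {Suc 0..n} s (s j) = j"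
  using inv_s[of j] by simp

lemma star_s: "i \<in> {1..n} \<Longrightarrow> j \<in> {1..n} \<Longrightarrow>
   s (psi (s i) (inv_into {1..n} s (s j))) = s (snd (s i) j)"
  by (simp add: inv_s psi_def)

lemma gen': "generate (Sigma_n n) (s ` {1..n}) = G" using gen at by simp

definition Rel :: bool where
  "Rel \<longleftrightarrow> (\<forall>i\<in>{1..n}. \<forall>j\<in>{1..n}.
      s i \<otimes>\<^bsub>Sigma_n n\<^esub> s (snd (s i) j) = s j \<otimes>\<^bsub>Sigma_n n\<^esub> s (snd (s j) i))"

lemma ii_iff_Rel:
  "(\<forall>a\<in>s ` {1..n}. \<forall>b\<in>s ` {1..n}.
      a \<otimes>\<^bsub>Sigma_n n\<^esub> s (psi a (inv_into {1..n} s b)) = b \<otimes>\<^bsub>Sigma_n n\<^esub> s (psi b (inv_into {1..n} s a)))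
   \<longleftrightarrow> Rel"
  unfolding Rel_def ball_simps by (simp add: inv_s psi_def)

lemma fst_prod_s:
  assumes i: "i \<in> {1..n}" and j: "j \<in> {1..n}"
  shows "fst (s i \<otimes>\<^bsub>Sigma_n n\<^esub> s (snd (s i) j)) = (\<lambda>l. Di_pow i k l + Di_pow j k l)"
proof
  fix l
  have inj: "inj (snd (s i))" using permutes_inj[OF sperm[OF i]] .
  have "(snd (s i) l = snd (s i) j) = (l = j)" using inj by (simp add: inj_eq)
  then show "fst (s i \<otimes>\<^bsub>Sigma_n n\<^esub> s (snd (s i) j)) l = Di_pow i k l + Di_pow j k l"
    by (simp add: mult_Sigma Ds'[OF i] Ds'[OF sperm_in[OF i j]] Di_pow_def)
qed

lemma permfree_Rel: "permutation_free n G \<Longrightarrow> Rel"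
  unfolding Rel_def
proof (intro ballI)
  fix i j assume pf: "permutation_free n G" and i: "i \<in> {1..n}" and j: "j \<in> {1..n}"
  define A where "A = s i \<otimes>\<^bsub>Sigma_n n\<^esub> s (snd (s i) j)"
  define B where "B = s j \<otimes>\<^bsub>Sigma_n n\<^esub> s (snd (s j) i)"
  have ij': "snd (s i) j \<in> {1..n}" "snd (s j) i \<in> {1..n}" using sperm_in i j by auto
  have AG: "A \<in> G" unfolding A_def by (rule subgroup.m_closed[OF sub s_G[OF i] s_G[OF ij'(1)]])
  have BG: "B \<in> G" unfolding B_def by (rule subgroup.m_closed[OF sub s_G[OF j] s_G[OF ij'(2)]])
  have AC: "A \<in> carrier (Sigma_n n)" using AG G_carr by (rule subsetD[rotated])
  have BC: "B \<in> carrier (Sigma_n n)" using BG G_carr by (rule subsetD[rotated])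
  have fAB: "fst A = fst B" unfolding A_def B_def fst_prod_s[OF i j] fst_prod_s[OF j i]
    by (simp add: add.commute)
  have e: "(inv\<^bsub>Sigma_n n\<^esub> B) \<otimes>\<^bsub>Sigma_n n\<^esub> A = Pmat (snd A \<circ> inv_into UNIV (snd B))"
    using Sigma_same_fst[OF AC BC fAB] .
  have "(inv\<^bsub>Sigma_n n\<^esub> B) \<otimes>\<^bsub>Sigma_n n\<^esub> A \<in> G"
    by (rule subgroup.m_closed[OF sub subgroup.m_inv_closed[OF sub BG] AG])
  then have PG: "Pmat (snd A \<circ> inv_into UNIV (snd B)) \<in> G" unfolding e .
  have pA: "snd A permutes {1..n}" using AC by (simp add: carrier_Sigma)
  have pB: "snd B permutes {1..n}" using BC by (simp add: carrier_Sigma)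
  have perm: "snd A \<circ> inv_into UNIV (snd B) permutes {1..n}"
    by (rule permutes_compose[OF permutes_inv[OF pB] pA])
  have "(inv\<^bsub>Sigma_n n\<^esub> B) \<otimes>\<^bsub>Sigma_n n\<^esub> A = \<one>\<^bsub>Sigma_n n\<^esub>"
    unfolding e by (rule pf[unfolded permutation_free_def, rule_format, OF perm PG])
  then have "A = B \<otimes>\<^bsub>Sigma_n n\<^esub> \<one>\<^bsub>Sigma_n n\<^esub>"
    using group.inv_solve_left'[OF group_Sigma monoid.one_closed[OF group.is_monoid[OF group_Sigma]] BC AC]
    by blast
  then have "A = B" using monoid.r_one[OF group.is_monoid[OF group_Sigma] BC] by simp
  then show "s i \<otimes>\<^bsub>Sigma_n n\<^esub> s (snd (s i) j) = s j \<otimes>\<^bsub>Sigma_n n\<^esub> s (snd (s j) i)"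
    by (simp add: A_def B_def)
qed

lemma Rel_permfree: "Rel \<Longrightarrow> permutation_free n G"
proof -
  assume R: Rel
  have gs: "gsetup (Sigma_n n) n k s id s"
  proof (intro gsetup.intro gsetup_axioms.intro group_Sigma)
    show "id \<in> hom (Sigma_n n) (Sigma_n n)" by (simp add: hom_def)
  next
    fix i j assume "i \<in> {1..n}" "j \<in> {1..n}"
    then show "s i \<otimes>\<^bsub>Sigma_n n\<^esub> s (snd (s i) j) = s j \<otimes>\<^bsub>Sigma_n n\<^esub> s (snd (s j) i)"
      using R unfolding Rel_def by blast
  qed (simp_all add: s_carr Ds' kpos)
  show ?thesis unfolding permutation_free_def
  proof (intro allI impI)
    fix \<sigma> assume "\<sigma> permutes {1..n}" "Pmat \<sigma> \<in> G"
    then have g: "Pmat \<sigma> \<in> generate (Sigma_n n) (s ` {1..n})" using gen' by simp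
    have f: "fst (id (Pmat \<sigma>)) = (\<lambda>_. 0)" by (simp add: Pmat_def)
    show "Pmat \<sigma> = \<one>\<^bsub>Sigma_n n\<^esub>"
      by (rule gsetup.trivial_kernel[OF gs g f])
  qed
qed

lemma Rel_cycle:
  assumes R: Rel
  shows "cycle_set (s ` {1..n}) (\<lambda>a b. s (psi a (inv_into {1..n} s b)))"
  unfolding cycle_set_def
proof (intro conjI ballI)
  fix a assume "a \<in> s ` {1..n}"
  then obtain i where i: "i \<in> {1..n}" "a = s i" by auto
  show "bij_betw (\<lambda>b. s (psi a (inv_into {1..n} s b))) (s ` {1..n}) (s ` {1..n})"
  proof (rule bij_betw_imageI)
    show "inj_on (\<lambda>b. s (psi a (inv_into {1..n} s b))) (s ` {1..n})"
    proof (rule inj_onI)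
      fix b1 b2 assume "b1 \<in> s ` {1..n}" "b2 \<in> s ` {1..n}"
        and eq: "s (psi a (inv_into {1..n} s b1)) = s (psi a (inv_into {1..n} s b2))"
      then obtain j1 j2 where j: "j1 \<in> {1..n}" "b1 = s j1" "j2 \<in> {1..n}" "b2 = s j2" by auto
      have "s (snd (s i) j1) = s (snd (s i) j2)" using eq j i star_s by simp
      then have "snd (s i) j1 = snd (s i) j2"
        by (rule inj_onD[OF inj_s _ sperm_in[OF i(1) j(1)] sperm_in[OF i(1) j(3)]])
      then have "j1 = j2" using permutes_inj[OF sperm[OF i(1)]] by (simp add: inj_eq)
      then show "b1 = b2" using j by simp
    qed
  next
    show "(\<lambda>b. s (psi a (inv_into {1..n} s b))) ` s ` {1..n} = s ` {1..n}"
    proof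
      show "(\<lambda>b. s (psi a (inv_into {1..n} s b))) ` s ` {1..n} \<subseteq> s ` {1..n}"
      proof (rule image_subsetI)
        fix b assume "b \<in> s ` {1..n}"
        then obtain j where j: "j \<in> {1..n}" "b = s j" by blast
        have "s (snd (s i) j) \<in> s ` {1..n}" using sperm_in[OF i(1) j(1)] by (rule imageI)
        then show "s (psi a (inv_into {1..n} s b)) \<in> s ` {1..n}"
          using star_s[OF i(1) j(1)] i(2) j(2) by simp
      qed
    next
      show "s ` {1..n} \<subseteq> (\<lambda>b. s (psi a (inv_into {1..n} s b))) ` s ` {1..n}"
      proof
        fix b assume "b \<in> s ` {1..n}"
        then obtain j where j: "j \<in> {1..n}" "b = s j" by auto
        define j' where "j' = inv_into UNIV (snd (s i)) j"
        have j': "j' \<in> {1..n}" "snd (s i) j' = j"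
          using permutes_in_image[OF permutes_inv[OF sperm[OF i(1)]]] j
            permutes_inverses(1)[OF sperm[OF i(1)]] by (auto simp: j'_def)
        have "b = s (psi a (inv_into {1..n} s (s j')))" using star_s[OF i(1) j'(1)] j' j i by simp
        then show "b \<in> (\<lambda>b. s (psi a (inv_into {1..n} s b))) ` s ` {1..n}" using j' by blast
      qed
    qed
  qed
next
  fix a b c assume "a \<in> s ` {1..n}" "b \<in> s ` {1..n}" "c \<in> s ` {1..n}"
  then obtain i j l where ijl: "i \<in> {1..n}" "a = s i" "j \<in> {1..n}" "b = s j" "l \<in> {1..n}" "c = s l" by auto
  have "s i \<otimes>\<^bsub>Sigma_n n\<^esub> s (snd (s i) j) = s j \<otimes>\<^bsub>Sigma_n n\<^esub> s (snd (s j) i)"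
    using R ijl(1,3) unfolding Rel_def by blast
  then have "snd (s i \<otimes>\<^bsub>Sigma_n n\<^esub> s (snd (s i) j)) = snd (s j \<otimes>\<^bsub>Sigma_n n\<^esub> s (snd (s j) i))"
    by (rule arg_cong)
  then have "(snd (s (snd (s i) j)) \<circ> snd (s i)) l = (snd (s (snd (s j) i)) \<circ> snd (s j)) l"
    unfolding mult_Sigma by simp
  then have "snd (s (snd (s i) j)) (snd (s i) l) = snd (s (snd (s j) i)) (snd (s j) l)"
    by simp
  then show "s (psi (s (psi a (inv_into {1..n} s b))) (inv_into {1..n} s (s (psi a (inv_into {1..n} s c))))) =
             s (psi (s (psi b (inv_into {1..n} s a))) (inv_into {1..n} s (s (psi b (inv_into {1..n} s c)))))"
  proof -
    have m1: "inv_into {1..n} s (s (snd (s i) l)) = snd (s i) l" using inv_s sperm_in ijl by simp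
    have m2: "inv_into {1..n} s (s (snd (s j) l)) = snd (s j) l" using inv_s sperm_in ijl by simp
    show ?thesis using m1 m2 ijl \<open>snd (s (snd (s i) j)) (snd (s i) l) = snd (s (snd (s j) i)) (snd (s j) l)\<close>
      by (simp add: psi_def inv_s)
  qed
qed

end

definition lett :: "nat \<Rightarrow> bool \<times> mono \<Rightarrow> mono" where
  "lett n a = (if fst a then snd a else inv\<^bsub>Sigma_n n\<^esub> (snd a))"

definition evw :: "nat \<Rightarrow> (bool \<times> mono) list \<Rightarrow> mono" where
  "evw n w = foldr (\<lambda>a acc. lett n a \<otimes>\<^bsub>Sigma_n n\<^esub> acc) w \<one>\<^bsub>Sigma_n n\<^esub>"

lemma evw_Nil[simp]: "evw n [] = \<one>\<^bsub>Sigma_n n\<^esub>"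
  and evw_Cons[simp]: "evw n (a # w) = lett n a \<otimes>\<^bsub>Sigma_n n\<^esub> evw n w"
  by (simp_all add: evw_def)

lemma lett_carr: "snd a \<in> carrier (Sigma_n n) \<Longrightarrow> lett n a \<in> carrier (Sigma_n n)"
  by (simp add: lett_def group.inv_closed[OF group_Sigma])

lemma evw_carr: "snd ` set w \<subseteq> carrier (Sigma_n n) \<Longrightarrow> evw n w \<in> carrier (Sigma_n n)"
proof (induction w)
  case Nil then show ?case by (simp add: monoid.one_closed[OF group.is_monoid[OF group_Sigma]])
next
  case (Cons a w)
  then show ?case using lett_carr[of a n] monoid.m_closed[OF group.is_monoid[OF group_Sigma]] by simp
qed

lemma evw_app: "snd ` set w \<subseteq> carrier (Sigma_n n) \<Longrightarrow> snd ` set v \<subseteq> carrier (Sigma_n n) \<Longrightarrow>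
   evw n (w @ v) = evw n w \<otimes>\<^bsub>Sigma_n n\<^esub> evw n v"
proof (induction w)
  case Nil then show ?case using evw_carr[OF Nil(2)] by (simp add: monoid.l_one[OF group.is_monoid[OF group_Sigma]])
next
  case (Cons a w)
  then show ?case using lett_carr[of a n] evw_carr[of w n] evw_carr[of v n]
    by (simp add: monoid.m_assoc[OF group.is_monoid[OF group_Sigma]])
qed

lemma lett_cancel:
  assumes "invl a b" "snd a \<in> carrier (Sigma_n n)" "y \<in> carrier (Sigma_n n)"
  shows "lett n a \<otimes>\<^bsub>Sigma_n n\<^esub> (lett n b \<otimes>\<^bsub>Sigma_n n\<^esub> y) = y"
proof -
  interpret Sg: group "Sigma_n n" by (rule group_Sigma)
  have sb: "snd b = snd a" and fb: "fst b = (\<not> fst a)" using assms(1) by (auto simp: invl_def)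
  have "lett n a \<otimes>\<^bsub>Sigma_n n\<^esub> lett n b = \<one>\<^bsub>Sigma_n n\<^esub>"
    using assms(2) by (cases "fst a") (simp_all add: lett_def sb fb)
  then show ?thesis using assms lett_carr[of a n] lett_carr[of b n] sb
    by (simp add: Sg.m_assoc[symmetric])
qed

lemma evw_red1: "snd ` set t \<subseteq> carrier (Sigma_n n) \<Longrightarrow> snd a \<in> carrier (Sigma_n n) \<Longrightarrow>
   evw n (red1 a t) = lett n a \<otimes>\<^bsub>Sigma_n n\<^esub> evw n t"
proof (cases t)
  case Nil then show ?thesis by (simp add: red1_def)
next
  case (Cons b bs)
  assume t: "snd ` set t \<subseteq> carrier (Sigma_n n)" and a: "snd a \<in> carrier (Sigma_n n)"
  show ?thesis
  proof (cases "invl a b")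
    case True
    have "evw n bs \<in> carrier (Sigma_n n)" using t Cons evw_carr[of bs n] by simp
    then show ?thesis using lett_cancel[OF True a] Cons True by (simp add: red1_def)
  next
    case False then show ?thesis using Cons by (simp add: red1_def)
  qed
qed

lemma evw_fg_red: "snd ` set w \<subseteq> carrier (Sigma_n n) \<Longrightarrow> evw n (fg_red w) = evw n w"
proof (induction w)
  case Nil then show ?case by simp
next
  case (Cons a w)
  have "snd ` set (fg_red w) \<subseteq> carrier (Sigma_n n)"
    using image_mono[OF set_fg_red[of w], of snd] Cons.prems by auto
  then show ?case using Cons by (simp add: fg_red_Cons evw_red1)
qed

lemma evw_hom: "S \<subseteq> carrier (Sigma_n n) \<Longrightarrow> evw n \<in> hom (free_group S) (Sigma_n n)"
proof (rule homI)
  fix w assume "S \<subseteq> carrier (Sigma_n n)" "w \<in> carrier (free_group S)"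
  then show "evw n w \<in> carrier (Sigma_n n)" by (intro evw_carr) (auto simp: carrier_FG)
next
  fix w v assume "S \<subseteq> carrier (Sigma_n n)" "w \<in> carrier (free_group S)" "v \<in> carrier (free_group S)"
  then have "snd ` set w \<subseteq> carrier (Sigma_n n)" "snd ` set v \<subseteq> carrier (Sigma_n n)"
    by (auto simp: carrier_FG)
  moreover then have "snd ` set (w @ v) \<subseteq> carrier (Sigma_n n)" by auto
  ultimately show "evw n (w \<otimes>\<^bsub>free_group S\<^esub> v) = evw n w \<otimes>\<^bsub>Sigma_n n\<^esub> evw n v"
    by (simp add: mult_FG evw_fg_red evw_app)
qed

lemma evw_sub: "subgroup H (Sigma_n n) \<Longrightarrow> snd ` set w \<subseteq> H \<Longrightarrow> evw n w \<in> H"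
proof (induction w)
  case Nil then show ?case by (simp add: subgroup.one_closed)
next
  case (Cons a w)
  have "lett n a \<in> H" using Cons.prems
    by (auto simp: lett_def subgroup.m_inv_closed)
  then show ?case using Cons by (simp add: subgroup.m_closed)
qed

lemma single_carr: "a \<in> S \<Longrightarrow> [(b, a)] \<in> carrier (free_group S)"
  by (simp add: carrier_FG fg_red_Cons red1_def)

lemma inv_single: "a \<in> S \<Longrightarrow> inv\<^bsub>free_group S\<^esub> [(True, a)] = [(False, a)]"
  by (rule group.inv_equality[OF group_FG])
     (simp_all add: single_carr mult_FG one_FG fg_red_Cons red1_def invl_def)

declare One_nat_def [simp del]

context mainctx begin

abbreviation SS where "SS \<equiv> s ` {1..n}"
abbreviation st where "st \<equiv> (\<lambda>a b. s (psi a (inv_into {1..n} s b)))"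
abbreviation FG where "FG \<equiv> free_group SS"
abbreviation RR where "RR \<equiv> cs_relators SS st"
abbreviation NN where "NN \<equiv> normal_closure FG RR"
abbreviation SG where "SG \<equiv> structure_group SS st"
abbreviation xg where "xg i \<equiv> sg_gen SS st (s i)"

definition CC where "CC = (\<Union>g\<in>carrier FG. (\<lambda>r. g \<otimes>\<^bsub>FG\<^esub> r \<otimes>\<^bsub>FG\<^esub> inv\<^bsub>FG\<^esub> g) ` RR)"

lemma SS_carr: "SS \<subseteq> carrier (Sigma_n n)" using S_G G_carr by blast

lemma st_S: "a \<in> SS \<Longrightarrow> b \<in> SS \<Longrightarrow> st a b \<in> SS"
proof -
  assume "a \<in> SS" "b \<in> SS"
  then obtain i j where ij: "i \<in> {1..n}" "a = s i" "j \<in> {1..n}" "b = s j" by blast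
  have "s (snd (s i) j) \<in> SS" using sperm_in[OF ij(1) ij(3)] by (rule imageI)
  then show ?thesis using star_s[OF ij(1) ij(3)] ij by simp
qed

lemma RR_carr: "RR \<subseteq> carrier FG"
proof
  fix r assume "r \<in> RR"
  then obtain a b where ab: "r = fg_red [(True, a), (True, st a b), (False, st b a), (False, b)]"
    "a \<in> SS" "b \<in> SS" unfolding cs_relators_def by blast
  have "snd ` set [(True, a), (True, st a b), (False, st b a), (False, b)] \<subseteq> SS"
    using ab st_S by auto
  moreover have "snd ` set r \<subseteq> snd ` set [(True, a), (True, st a b), (False, st b a), (False, b)]"
    unfolding ab(1) by (rule image_mono[OF set_fg_red])
  ultimately have "snd ` set r \<subseteq> SS" by (rule subset_trans[rotated])
  then show "r \<in> carrier FG" using ab(1) by (simp add: carrier_FG)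
qed

lemma CC_carr: "CC \<subseteq> carrier FG"
proof -
  interpret F: group FG by (rule group_FG)
  show ?thesis unfolding CC_def using RR_carr by auto
qed

lemma NN_CC: "NN = generate FG CC"
  by (simp add: normal_closure_def CC_def)

lemma NN_normal: "NN \<lhd> FG"
proof -
  interpret F: group FG by (rule group_FG)
  show ?thesis unfolding NN_CC
  proof (rule F.normal_generateI[OF CC_carr])
    fix h g assume h: "h \<in> CC" and g: "g \<in> carrier FG"
    then obtain g' r where gr: "g' \<in> carrier FG" "r \<in> RR" "h = g' \<otimes>\<^bsub>FG\<^esub> r \<otimes>\<^bsub>FG\<^esub> inv\<^bsub>FG\<^esub> g'"
      unfolding CC_def by blast
    have rc: "r \<in> carrier FG" using gr(2) RR_carr by blast
    have "g \<otimes>\<^bsub>FG\<^esub> h \<otimes>\<^bsub>FG\<^esub> inv\<^bsub>FG\<^esub> g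
        = (g \<otimes>\<^bsub>FG\<^esub> g') \<otimes>\<^bsub>FG\<^esub> r \<otimes>\<^bsub>FG\<^esub> inv\<^bsub>FG\<^esub> (g \<otimes>\<^bsub>FG\<^esub> g')"
      using g gr(1) rc gr(3) by (simp add: F.inv_mult_group F.m_assoc)
    moreover have "g \<otimes>\<^bsub>FG\<^esub> g' \<in> carrier FG" using g gr(1) by simp
    ultimately show "g \<otimes>\<^bsub>FG\<^esub> h \<otimes>\<^bsub>FG\<^esub> inv\<^bsub>FG\<^esub> g \<in> CC"
      unfolding CC_def using gr(2) by blast
  qed
qed

lemma NN_sub: "subgroup NN FG" using normal_imp_subgroup[OF NN_normal] .

lemma RR_NN: "RR \<subseteq> NN"
proof
  interpret F: group FG by (rule group_FG)
  fix r assume r: "r \<in> RR"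
  then have rc: "r \<in> carrier FG" using RR_carr by blast
  have "r = \<one>\<^bsub>FG\<^esub> \<otimes>\<^bsub>FG\<^esub> r \<otimes>\<^bsub>FG\<^esub> inv\<^bsub>FG\<^esub> \<one>\<^bsub>FG\<^esub>" using rc by simp
  then have "r \<in> CC" unfolding CC_def using r F.one_closed by blast
  then show "r \<in> NN" unfolding NN_CC by (rule generate.incl)
qed

lemma grpSG: "group SG"
  unfolding structure_group_def using normal.factorgroup_is_group[OF NN_normal] .

lemma carrier_SG: "carrier SG = (\<lambda>w. NN #>\<^bsub>FG\<^esub> w) ` carrier FG"
  unfolding structure_group_def by (rule carrier_FactGroup)

lemma rcos_mult: "w \<in> carrier FG \<Longrightarrow> v \<in> carrier FG \<Longrightarrow>
   (NN #>\<^bsub>FG\<^esub> w) \<otimes>\<^bsub>SG\<^esub> (NN #>\<^bsub>FG\<^esub> v) = NN #>\<^bsub>FG\<^esub> (w \<otimes>\<^bsub>FG\<^esub> v)"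
  unfolding structure_group_def mult_FactGroup by (rule normal.rcos_sum[OF NN_normal])

lemma xg_eq: "xg i = NN #>\<^bsub>FG\<^esub> [(True, s i)]" by (simp add: sg_gen_def)

lemma xg_carr: "i \<in> {1..n} \<Longrightarrow> xg i \<in> carrier SG"
  unfolding xg_eq carrier_SG using single_carr[of "s i" SS] by blast

lemma SG_rel: "i \<in> {1..n} \<Longrightarrow> j \<in> {1..n} \<Longrightarrow>
   xg i \<otimes>\<^bsub>SG\<^esub> xg (snd (s i) j) = xg j \<otimes>\<^bsub>SG\<^esub> xg (snd (s j) i)"
proof -
  interpret F: group FG by (rule group_FG)
  assume i: "i \<in> {1..n}" and j: "j \<in> {1..n}"
  show ?thesis
  proof (cases "i = j")
    case True then show ?thesis by simp
  next
    case False
    define a b c d where "a = s i" "b = s j" "c = s (snd (s i) j)" "d = s (snd (s j) i)"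
    have abcd: "a \<in> SS" "b \<in> SS" "c \<in> SS" "d \<in> SS" using i j sperm_in a_b_c_d_def by auto
    have ab: "a \<noteq> b" using False inj_onD[OF inj_s _ i j] a_b_c_d_def by auto
    have stab: "st a b = c" "st b a = d" using star_s[OF i j] star_s[OF j i] a_b_c_d_def by auto
    define p q where "p = [(True, a)] \<otimes>\<^bsub>FG\<^esub> [(True, c)]" "q = [(True, b)] \<otimes>\<^bsub>FG\<^esub> [(True, d)]"
    have pc: "p \<in> carrier FG" unfolding p_q_def
      by (rule F.m_closed[OF single_carr[OF abcd(1)] single_carr[OF abcd(3)]])
    have qc: "q \<in> carrier FG" unfolding p_q_def
      by (rule F.m_closed[OF single_carr[OF abcd(2)] single_carr[OF abcd(4)]])
    have "inv\<^bsub>FG\<^esub> q = inv\<^bsub>FG\<^esub> [(True, d)] \<otimes>\<^bsub>FG\<^esub> inv\<^bsub>FG\<^esub> [(True, b)]"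
      unfolding p_q_def by (rule F.inv_mult_group[OF single_carr[OF abcd(2)] single_carr[OF abcd(4)]])
    also have "\<dots> = [(False, d)] \<otimes>\<^bsub>FG\<^esub> [(False, b)]"
      using inv_single[OF abcd(4)] inv_single[OF abcd(2)] by simp
    finally have "inv\<^bsub>FG\<^esub> q = [(False, d)] \<otimes>\<^bsub>FG\<^esub> [(False, b)]" .
    then have "p \<otimes>\<^bsub>FG\<^esub> inv\<^bsub>FG\<^esub> q = fg_red [(True, a), (True, c), (False, d), (False, b)]"
      unfolding p_q_def mult_FG by (simp add: fg_red_app_left fg_red_app_right[symmetric])
    also have "\<dots> \<in> RR" unfolding cs_relators_def using abcd ab stab by fastforce
    finally have "p \<otimes>\<^bsub>FG\<^esub> inv\<^bsub>FG\<^esub> q \<in> NN" using RR_NN by blast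
    then have "p \<in> NN #>\<^bsub>FG\<^esub> q" by (rule subgroup.rcos_module_rev[OF NN_sub group_FG qc pc])
    then have eq: "NN #>\<^bsub>FG\<^esub> q = NN #>\<^bsub>FG\<^esub> p" by (rule F.repr_independence[OF _ qc NN_sub])
    have e1: "xg i \<otimes>\<^bsub>SG\<^esub> xg (snd (s i) j) = NN #>\<^bsub>FG\<^esub> p"
      unfolding xg_eq p_q_def using rcos_mult[OF single_carr[OF abcd(1)] single_carr[OF abcd(3)]] a_b_c_d_def
      by simp
    have e2: "xg j \<otimes>\<^bsub>SG\<^esub> xg (snd (s j) i) = NN #>\<^bsub>FG\<^esub> q"
      unfolding xg_eq p_q_def using rcos_mult[OF single_carr[OF abcd(2)] single_carr[OF abcd(4)]] a_b_c_d_def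
      by simp
    show ?thesis unfolding e1 e2 eq ..
  qed
qed

lemma SG_gen: "carrier SG \<subseteq> generate SG (xg ` {1..n})"
proof -
  interpret F: group FG by (rule group_FG)
  interpret Q: group SG by (rule grpSG)
  have hom: "group_hom FG SG (\<lambda>w. NN #>\<^bsub>FG\<^esub> w)"
  proof (rule group_hom.intro[OF group_FG grpSG])
    show "group_hom_axioms FG SG (\<lambda>w. NN #>\<^bsub>FG\<^esub> w)"
      unfolding group_hom_axioms_def structure_group_def by (rule normal.r_coset_hom_Mod[OF NN_normal])
  qed
  have "snd ` set w \<subseteq> SS \<Longrightarrow> noadj w \<Longrightarrow> NN #>\<^bsub>FG\<^esub> w \<in> generate SG (xg ` {1..n})" for w
  proof (induction w)
    case Nil
    have o: "\<one>\<^bsub>SG\<^esub> = NN" unfolding structure_group_def by (rule one_FactGroup)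
    have "NN #>\<^bsub>FG\<^esub> [] = NN"
      using F.coset_mult_one[OF subgroup.subset[OF NN_sub]] unfolding one_FG .
    then have "NN #>\<^bsub>FG\<^esub> [] = \<one>\<^bsub>SG\<^esub>" unfolding o .
    then show ?case by (simp only: generate.one)
  next
    case (Cons a w)
    have w: "snd ` set w \<subseteq> SS" "noadj w" using Cons.prems(1) noadj_tl[OF Cons.prems(2)] by auto
    have wc: "w \<in> carrier FG" using w noadj_fix by (simp add: carrier_FG)
    have ac: "snd a \<in> SS" using Cons.prems by auto
    have ac': "[a] \<in> carrier FG" using single_carr[OF ac, of "fst a"] by simp
    have "[a] \<otimes>\<^bsub>FG\<^esub> w = a # w" using noadj_fix[OF Cons.prems(2)] by (simp add: mult_FG)
    then have e: "NN #>\<^bsub>FG\<^esub> (a # w) = (NN #>\<^bsub>FG\<^esub> [a]) \<otimes>\<^bsub>SG\<^esub> (NN #>\<^bsub>FG\<^esub> w)"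
      using rcos_mult[OF ac' wc] by simp
    obtain i where i: "i \<in> {1..n}" "snd a = s i" using ac by blast
    have "NN #>\<^bsub>FG\<^esub> [a] \<in> generate SG (xg ` {1..n})"
    proof (cases "fst a")
      case True
      then have "a = (True, s i)" using i by (cases a) simp
      then have "NN #>\<^bsub>FG\<^esub> [a] = xg i" by (simp add: xg_eq)
      moreover have "xg i \<in> xg ` {1..n}" using i(1) by (rule imageI)
      ultimately show ?thesis by (simp only: generate.incl)
    next
      case False
      then have "a = (False, s i)" using i by (cases a) simp
      moreover have "s i \<in> SS" using i(1) by (rule imageI)
      ultimately have "[a] = inv\<^bsub>FG\<^esub> [(True, s i)]" using inv_single[of "s i" SS] by simp
      then have "NN #>\<^bsub>FG\<^esub> [a] = inv\<^bsub>SG\<^esub> (xg i)"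
        using group_hom.hom_inv[OF hom single_carr[of "s i" SS True]] i by (simp add: xg_eq)
      moreover have "xg i \<in> xg ` {1..n}" using i(1) by (rule imageI)
      ultimately show ?thesis by (simp only: generate.inv)
    qed
    then show ?case unfolding e by (rule generate.eng[OF _ Cons.IH[OF w]])
  qed
  then show ?thesis
  proof -
    assume H: "\<And>w. snd ` set w \<subseteq> SS \<Longrightarrow> noadj w \<Longrightarrow> NN #>\<^bsub>FG\<^esub> w \<in> generate SG (xg ` {1..n})"
    show ?thesis
    proof
      fix C assume "C \<in> carrier SG"
      then obtain w where w: "w \<in> carrier FG" "C = NN #>\<^bsub>FG\<^esub> w" unfolding carrier_SG by blast
      then have w1: "snd ` set w \<subseteq> SS" and w2: "fg_red w = w" by (simp_all add: carrier_FG)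
      have "noadj w" using noadj_fg_red[of w] unfolding w2 .
      then show "C \<in> generate SG (xg ` {1..n})" using H[OF w1] w(2) by simp
    qed
  qed
qed

end

context mainctx begin

lemma evw_RR:
  assumes R: Rel and r: "r \<in> RR"
  shows "evw n r = \<one>\<^bsub>Sigma_n n\<^esub>"
proof -
  interpret Sg: group "Sigma_n n" by (rule group_Sigma)
  obtain a b where ab: "r = fg_red [(True, a), (True, st a b), (False, st b a), (False, b)]"
    "a \<in> SS" "b \<in> SS" using r unfolding cs_relators_def by blast
  obtain i j where ij: "i \<in> {1..n}" "a = s i" "j \<in> {1..n}" "b = s j" using ab by blast
  define c d where "c = s (snd (s i) j)" "d = s (snd (s j) i)"
  have stab: "st a b = c" "st b a = d" using star_s[OF ij(1) ij(3)] star_s[OF ij(3) ij(1)] ij c_d_def by auto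
  have cr: "a \<in> carrier (Sigma_n n)" "b \<in> carrier (Sigma_n n)" "c \<in> carrier (Sigma_n n)" "d \<in> carrier (Sigma_n n)"
    using ij c_d_def s_carr sperm_in by auto
  have rel: "a \<otimes>\<^bsub>Sigma_n n\<^esub> c = b \<otimes>\<^bsub>Sigma_n n\<^esub> d"
    using R ij c_d_def unfolding Rel_def by blast
  have "snd ` set [(True, a), (True, st a b), (False, st b a), (False, b)] \<subseteq> carrier (Sigma_n n)"
    using cr stab by auto
  then have "evw n r = evw n [(True, a), (True, c), (False, d), (False, b)]"
    unfolding ab(1) stab by (rule evw_fg_red[unfolded stab])
  also have "\<dots> = a \<otimes>\<^bsub>Sigma_n n\<^esub> (c \<otimes>\<^bsub>Sigma_n n\<^esub> (inv\<^bsub>Sigma_n n\<^esub> d \<otimes>\<^bsub>Sigma_n n\<^esub> (inv\<^bsub>Sigma_n n\<^esub> b \<otimes>\<^bsub>Sigma_n n\<^esub> \<one>\<^bsub>Sigma_n n\<^esub>)))"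
    by (simp add: lett_def)
  also have "\<dots> = (a \<otimes>\<^bsub>Sigma_n n\<^esub> c) \<otimes>\<^bsub>Sigma_n n\<^esub> inv\<^bsub>Sigma_n n\<^esub> d \<otimes>\<^bsub>Sigma_n n\<^esub> inv\<^bsub>Sigma_n n\<^esub> b"
    using cr by (simp add: Sg.m_assoc)
  also have "\<dots> = b \<otimes>\<^bsub>Sigma_n n\<^esub> (d \<otimes>\<^bsub>Sigma_n n\<^esub> inv\<^bsub>Sigma_n n\<^esub> d) \<otimes>\<^bsub>Sigma_n n\<^esub> inv\<^bsub>Sigma_n n\<^esub> b"
    unfolding rel using cr by (simp add: Sg.m_assoc)
  also have "\<dots> = \<one>\<^bsub>Sigma_n n\<^esub>" using cr by simp
  finally show ?thesis .
qed

lemma evw_ghom: "group_hom FG (Sigma_n n) (evw n)"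
proof (rule group_hom.intro[OF group_FG group_Sigma])
  show "group_hom_axioms FG (Sigma_n n) (evw n)"
    unfolding group_hom_axioms_def by (rule evw_hom[OF SS_carr])
qed

lemma NN_ker: assumes R: Rel shows "NN \<subseteq> kernel FG (Sigma_n n) (evw n)"
proof -
  interpret F: group FG by (rule group_FG)
  interpret Sg: group "Sigma_n n" by (rule group_Sigma)
  have "CC \<subseteq> kernel FG (Sigma_n n) (evw n)"
  proof
    fix h assume h: "h \<in> CC"
    then obtain g r where gr: "g \<in> carrier FG" "r \<in> RR" "h = g \<otimes>\<^bsub>FG\<^esub> r \<otimes>\<^bsub>FG\<^esub> inv\<^bsub>FG\<^esub> g"
      unfolding CC_def by blast
    have rc: "r \<in> carrier FG" using gr(2) RR_carr by blast
    have ec: "evw n g \<in> carrier (Sigma_n n)" using group_hom.hom_closed[OF evw_ghom gr(1)] .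
    have "evw n h = evw n g \<otimes>\<^bsub>Sigma_n n\<^esub> evw n r \<otimes>\<^bsub>Sigma_n n\<^esub> inv\<^bsub>Sigma_n n\<^esub> (evw n g)"
      unfolding gr(3) using gr(1) rc
      by (simp add: group_hom.hom_mult[OF evw_ghom] group_hom.hom_inv[OF evw_ghom])
    also have "\<dots> = \<one>\<^bsub>Sigma_n n\<^esub>" unfolding evw_RR[OF R gr(2)] using ec by simp
    finally show "h \<in> kernel FG (Sigma_n n) (evw n)"
      unfolding kernel_def using h CC_carr by blast
  qed
  then show ?thesis unfolding NN_CC
    by (rule F.generate_subgroup_incl[OF _ group_hom.subgroup_kernel[OF evw_ghom]])
qed

lemma hh_exists:
  assumes R: Rel
  shows "\<exists>hh. hh \<in> hom SG (Sigma_n n) \<and> (\<forall>w\<in>carrier FG. hh (NN #>\<^bsub>FG\<^esub> w) = evw n w)"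
proof -
  interpret F: group FG by (rule group_FG)
  interpret Sg: group "Sigma_n n" by (rule group_Sigma)
  have cond: "evw n x = evw n y"
    if xy: "x \<in> carrier FG" "y \<in> carrier FG" "NN #>\<^bsub>FG\<^esub> x = NN #>\<^bsub>FG\<^esub> y" for x y
  proof -
    have "y \<in> NN #>\<^bsub>FG\<^esub> x" by (rule F.repr_independenceD[OF NN_sub xy(2) xy(3)])
    then have "y \<otimes>\<^bsub>FG\<^esub> inv\<^bsub>FG\<^esub> x \<in> NN" by (rule subgroup.rcos_module_imp[OF NN_sub group_FG xy(1)])
    then have "evw n (y \<otimes>\<^bsub>FG\<^esub> inv\<^bsub>FG\<^esub> x) = \<one>\<^bsub>Sigma_n n\<^esub>" using NN_ker[OF R] unfolding kernel_def by blast
    then have e: "evw n y \<otimes>\<^bsub>Sigma_n n\<^esub> inv\<^bsub>Sigma_n n\<^esub> (evw n x) = \<one>\<^bsub>Sigma_n n\<^esub>"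
      using xy by (simp add: group_hom.hom_mult[OF evw_ghom] group_hom.hom_inv[OF evw_ghom])
    have c1: "evw n x \<in> carrier (Sigma_n n)" "evw n y \<in> carrier (Sigma_n n)"
      using group_hom.hom_closed[OF evw_ghom] xy by auto
    have "evw n y = \<one>\<^bsub>Sigma_n n\<^esub> \<otimes>\<^bsub>Sigma_n n\<^esub> evw n x"
      using Sg.inv_solve_right'[OF Sg.one_closed c1(2) c1(1)] e by blast
    then show ?thesis using c1 by simp
  qed
  obtain g where g: "g \<in> hom (FG Mod NN) (Sigma_n n)" "\<And>x. x \<in> carrier FG \<Longrightarrow> g (NN #>\<^bsub>FG\<^esub> x) = evw n x"
    using FactGroup_universal[OF evw_hom[OF SS_carr] NN_normal, of thesis] cond by blast
  then show ?thesis unfolding structure_group_def by blast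
qed

context
  fixes hh assumes R: Rel and hh_hom: "hh \<in> hom SG (Sigma_n n)"
    and hh_eq: "\<forall>w\<in>carrier FG. hh (NN #>\<^bsub>FG\<^esub> w) = evw n w"
begin

lemma hh_G: "C \<in> carrier SG \<Longrightarrow> hh C \<in> G"
proof -
  assume "C \<in> carrier SG"
  then obtain w where w: "w \<in> carrier FG" "C = NN #>\<^bsub>FG\<^esub> w" unfolding carrier_SG by blast
  have "snd ` set w \<subseteq> SS" using w(1) by (simp add: carrier_FG)
  then have "snd ` set w \<subseteq> G" using S_G by (rule subset_trans)
  then have "evw n w \<in> G" by (rule evw_sub[OF sub])
  then show ?thesis unfolding w(2) hh_eq[rule_format, OF w(1)] .
qed

lemma hh_xg: "i \<in> {1..n} \<Longrightarrow> hh (xg i) = s i"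
proof -
  assume i: "i \<in> {1..n}"
  have "s i \<in> SS" using i by (rule imageI)
  then have "[(True, s i)] \<in> carrier FG" by (rule single_carr)
  then have "hh (xg i) = evw n [(True, s i)]" unfolding xg_eq by (rule hh_eq[rule_format])
  also have "\<dots> = s i" using s_carr[OF i]
    by (simp add: lett_def monoid.r_one[OF group.is_monoid[OF group_Sigma]])
  finally show ?thesis .
qed

lemma gs: "gsetup SG n k s hh (\<lambda>i. xg i)"
proof (rule gsetup.intro[OF grpSG], rule gsetup_axioms.intro)
  show "hh \<in> hom SG (Sigma_n n)" by (rule hh_hom)
next
  fix i assume "i \<in> {1..n}" then show "xg i \<in> carrier SG" by (rule xg_carr)
next
  fix i assume "i \<in> {1..n}" then show "hh (xg i) = s i" by (rule hh_xg)
next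
  fix i assume "i \<in> {1..n}" then show "s i \<in> carrier (Sigma_n n)" by (rule s_carr)
next
  fix i assume "i \<in> {1..n}" then show "fst (s i) = Di_pow i k" by (rule Ds')
next
  show "0 < k" by (rule kpos)
next
  fix i j assume "i \<in> {1..n}" "j \<in> {1..n}"
  then show "xg i \<otimes>\<^bsub>SG\<^esub> xg (snd (s i) j) = xg j \<otimes>\<^bsub>SG\<^esub> xg (snd (s j) i)" by (rule SG_rel)
qed

lemma hh_ghom: "group_hom SG (Sigma_n n) hh"
proof (rule group_hom.intro[OF grpSG group_Sigma])
  show "group_hom_axioms SG (Sigma_n n) hh" unfolding group_hom_axioms_def by (rule hh_hom)
qed

lemma hh_inj: "inj_on hh (carrier SG)"
  unfolding group_hom.inj_on_one_iff[OF hh_ghom]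
proof (intro allI impI)
  fix y assume y: "y \<in> carrier SG" and h1: "hh y = \<one>\<^bsub>Sigma_n n\<^esub>"
  have yg: "y \<in> generate SG ((\<lambda>i. xg i) ` {1..n})" using SG_gen y by blast
  have "fst (hh y) = (\<lambda>_. 0)" using h1 by (simp add: one_Sigma)
  then show "y = \<one>\<^bsub>SG\<^esub>" by (rule gsetup.trivial_kernel[OF gs yg])
qed

lemma hh_surj: "G \<subseteq> hh ` carrier SG"
proof
  interpret F: group FG by (rule group_FG)
  fix g assume "g \<in> G"
  then have "g \<in> generate (Sigma_n n) SS" using gen' by simp
  then have "\<exists>w\<in>carrier FG. evw n w = g"
  proof (induction rule: generate.induct)
    case one
    then show ?case using F.one_closed by (intro bexI[of _ "[]"]) (simp_all add: one_FG)
  next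
    case (incl h)
    then have "h \<in> carrier (Sigma_n n)" using SS_carr by blast
    then show ?case using single_carr[OF incl] 
      by (intro bexI[of _ "[(True, h)]"]) (simp_all add: lett_def monoid.r_one[OF group.is_monoid[OF group_Sigma]])
  next
    case (inv h)
    then have "h \<in> carrier (Sigma_n n)" using SS_carr by blast
    then show ?case using single_carr[OF inv]
      by (intro bexI[of _ "[(False, h)]"])
         (simp_all add: lett_def monoid.r_one[OF group.is_monoid[OF group_Sigma]] group.inv_closed[OF group_Sigma])
  next
    case (eng h1 h2)
    then obtain w1 w2 where w: "w1 \<in> carrier FG" "evw n w1 = h1" "w2 \<in> carrier FG" "evw n w2 = h2" by blast
    then show ?case using group_hom.hom_mult[OF evw_ghom w(1) w(3)]
      by (intro bexI[of _ "w1 \<otimes>\<^bsub>FG\<^esub> w2"]) simp_all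
  qed
  then obtain w where w: "w \<in> carrier FG" "evw n w = g" by blast
  have "NN #>\<^bsub>FG\<^esub> w \<in> carrier SG" unfolding carrier_SG using w(1) by blast
  moreover have "hh (NN #>\<^bsub>FG\<^esub> w) = g" using hh_eq w by simp
  ultimately show "g \<in> hh ` carrier SG" by blast
qed

lemma hh_iso: "hh \<in> iso SG ((Sigma_n n)\<lparr>carrier := G\<rparr>)"
  unfolding iso_def
proof (intro CollectI conjI)
  show "hh \<in> hom SG ((Sigma_n n)\<lparr>carrier := G\<rparr>)"
    using hh_hom hh_G unfolding hom_def by auto
  show "bij_betw hh (carrier SG) (carrier ((Sigma_n n)\<lparr>carrier := G\<rparr>))"
    unfolding bij_betw_def using hh_inj hh_G hh_surj by auto
qed

end

lemma Rel_iso: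
  assumes R: Rel
  shows "\<exists>h. h \<in> iso SG ((Sigma_n n)\<lparr>carrier := G\<rparr>) \<and> (\<forall>a\<in>SS. h (sg_gen SS st a) = a)"
proof -
  obtain hh where hh: "hh \<in> hom SG (Sigma_n n)" "\<forall>w\<in>carrier FG. hh (NN #>\<^bsub>FG\<^esub> w) = evw n w"
    using hh_exists[OF R] by blast
  have "\<forall>a\<in>SS. hh (sg_gen SS st a) = a" using hh_xg[OF R hh] by blast
  then show ?thesis using hh_iso[OF R hh] by blast
qed

lemma iso_Rel:
  assumes h: "h \<in> iso SG ((Sigma_n n)\<lparr>carrier := G\<rparr>)" and hg: "\<forall>a\<in>SS. h (sg_gen SS st a) = a"
  shows Rel
  unfolding Rel_def
proof (intro ballI)
  fix i j assume i: "i \<in> {1..n}" and j: "j \<in> {1..n}"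
  have hom: "h \<in> hom SG ((Sigma_n n)\<lparr>carrier := G\<rparr>)" using h by (simp add: iso_def)
  have ij': "snd (s i) j \<in> {1..n}" "snd (s j) i \<in> {1..n}" using sperm_in i j by auto
  have hx: "h (xg l) = s l" if "l \<in> {1..n}" for l
  proof -
    have "s l \<in> SS" using that by (rule imageI)
    then show ?thesis using hg by blast
  qed
  have "h (xg i \<otimes>\<^bsub>SG\<^esub> xg (snd (s i) j)) = h (xg j \<otimes>\<^bsub>SG\<^esub> xg (snd (s j) i))"
    using SG_rel[OF i j] by simp
  then show "s i \<otimes>\<^bsub>Sigma_n n\<^esub> s (snd (s i) j) = s j \<otimes>\<^bsub>Sigma_n n\<^esub> s (snd (s j) i)"
    using hom_mult[OF hom xg_carr[OF i] xg_carr[OF ij'(1)]] hom_mult[OF hom xg_carr[OF j] xg_carr[OF ij'(2)]]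
      hx i j ij' by simp
qed

lemma main_result:
  "(permutation_free n G \<longleftrightarrow>
      (\<forall>a\<in>SS. \<forall>b\<in>SS. a \<otimes>\<^bsub>Sigma_n n\<^esub> st a b = b \<otimes>\<^bsub>Sigma_n n\<^esub> st b a))
   \<and> (permutation_free n G \<longleftrightarrow>
      (cycle_set SS st \<and> (\<exists>h. h \<in> iso SG ((Sigma_n n)\<lparr>carrier := G\<rparr>) \<and> (\<forall>a\<in>SS. h (sg_gen SS st a) = a))))"
proof -
  have 1: "permutation_free n G \<longleftrightarrow> Rel" using permfree_Rel Rel_permfree by blast
  have 2: "(cycle_set SS st \<and> (\<exists>h. h \<in> iso SG ((Sigma_n n)\<lparr>carrier := G\<rparr>) \<and> (\<forall>a\<in>SS. h (sg_gen SS st a) = a)))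
           \<longleftrightarrow> Rel"
  proof
    assume "cycle_set SS st \<and> (\<exists>h. h \<in> iso SG ((Sigma_n n)\<lparr>carrier := G\<rparr>) \<and> (\<forall>a\<in>SS. h (sg_gen SS st a) = a))"
    then obtain h where "h \<in> iso SG ((Sigma_n n)\<lparr>carrier := G\<rparr>)" "\<forall>a\<in>SS. h (sg_gen SS st a) = a" by blast
    then show Rel by (rule iso_Rel)
  next
    assume R: Rel
    show "cycle_set SS st \<and> (\<exists>h. h \<in> iso SG ((Sigma_n n)\<lparr>carrier := G\<rparr>) \<and> (\<forall>a\<in>SS. h (sg_gen SS st a) = a))"
      using Rel_cycle[OF R] Rel_iso[OF R] by (rule conjI)
  qed
  show ?thesis unfolding ii_iff_Rel 1 2 by (rule conjI[OF refl refl])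
qed

end

theorem mainTheorem2:
  fixes n :: nat and G :: "mono set" and s :: "nat \<Rightarrow> mono" and k :: int
  assumes "subgroup G (Sigma_n n)"
    and "atoms (Sigma_n n) (G \<inter> Sigma_n_plus n) = s ` {1..n}"
    and "card (atoms (Sigma_n n) (G \<inter> Sigma_n_plus n)) = n"
    and "generate (Sigma_n n) (atoms (Sigma_n n) (G \<inter> Sigma_n_plus n)) = G"
    and "k > 0"
    and "\<forall>i\<in>{1..n}. Dpart (s i) = Di_pow i k"
  shows "let S = atoms (Sigma_n n) (G \<inter> Sigma_n_plus n);
             star = (\<lambda>a b. s (psi a (inv_into {1..n} s b)))
         in (permutation_free n G
               \<longleftrightarrow> (\<forall>a\<in>S. \<forall>b\<in>S. a \<otimes>\<^bsub>Sigma_n n\<^esub> star a b = b \<otimes>\<^bsub>Sigma_n n\<^esub> star b a))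
          \<and> (permutation_free n G
               \<longleftrightarrow> (cycle_set S star \<and>
                    (\<exists>h. h \<in> iso (structure_group S star) ((Sigma_n n)\<lparr>carrier := G\<rparr>) \<and>
                         (\<forall>a\<in>S. h (sg_gen S star a) = a))))"
proof -
  have m: "mainctx n G s k" by (rule mainctx.intro[OF assms])
  show ?thesis unfolding Let_def assms(2) using mainctx.main_result[OF m] .
qed

end
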